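(* Let $G_1$ and $G_2$ be topological groupoids with $G_1$ proper. Suppose that $f\colon G_1\to G_2$ is a surjective continuous groupoid morphism such that the induced map $f'\colon G_1^{(0)}\to G_2^{(0)}$ is proper. Then $G_2$ is proper.
   Context: A continuous map is proper if it is closed and has quasi-compact fibres (quasi-compact: every open cover has a finite subcover). A topological groupoid $G$ is proper if $(r,s)\colon G\to G^{(0)}\times G^{(0)}$ is proper. *)

theory Defs
  imports "HOL-Analysis.Analysis"
begin

record 'a topgroupoid =
  gtop  :: "'a topology"
  units :: "'a set"
  rng   :: "'a \<Rightarrow> 'a"
  src   :: "'a \<Rightarrow> 'a"
  mult  :: "'a \<Rightarrow> 'a \<Rightarrow> 'a"
  ginv  :: "'a \<Rightarrow> 'a"

definition arrows :: "('a, 'b) topgroupoid_scheme \<Rightarrow> 'a set" where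
  "arrows G = topspace (gtop G)"

definition composable :: "('a, 'b) topgroupoid_scheme \<Rightarrow> ('a \<times> 'a) set" where
  "composable G = {(g, h). g \<in> arrows G \<and> h \<in> arrows G \<and> src G g = rng G h}"

definition groupoid :: "('a, 'b) topgroupoid_scheme \<Rightarrow> bool" where
  "groupoid G \<longleftrightarrow>
     units G \<subseteq> arrows G \<and>
     (\<forall>g \<in> arrows G. rng G g \<in> units G \<and> src G g \<in> units G) \<and>
     (\<forall>u \<in> units G. rng G u = u \<and> src G u = u) \<and>
     (\<forall>(g, h) \<in> composable G. mult G g h \<in> arrows G \<and>
        rng G (mult G g h) = rng G g \<and> src G (mult G g h) = src G h) \<and>
     (\<forall>g \<in> arrows G. \<forall>h \<in> arrows G. \<forall>k \<in> arrows G.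
        src G g = rng G h \<longrightarrow> src G h = rng G k \<longrightarrow>
        mult G (mult G g h) k = mult G g (mult G h k)) \<and>
     (\<forall>g \<in> arrows G. mult G (rng G g) g = g \<and> mult G g (src G g) = g) \<and>
     (\<forall>g \<in> arrows G. ginv G g \<in> arrows G \<and>
        rng G (ginv G g) = src G g \<and> src G (ginv G g) = rng G g \<and>
        mult G g (ginv G g) = rng G g \<and> mult G (ginv G g) g = src G g)"

definition topological_groupoid :: "('a, 'b) topgroupoid_scheme \<Rightarrow> bool" where
  "topological_groupoid G \<longleftrightarrow>
     groupoid G \<and>
     continuous_map (subtopology (prod_topology (gtop G) (gtop G)) (composable G)) (gtop G)
       (\<lambda>(g, h). mult G g h) \<and>
     continuous_map (gtop G) (gtop G) (ginv G) \<and>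
     continuous_map (gtop G) (gtop G) (rng G) \<and>
     continuous_map (gtop G) (gtop G) (src G)"

definition unit_space :: "('a, 'b) topgroupoid_scheme \<Rightarrow> 'a topology" where
  "unit_space G = subtopology (gtop G) (units G)"

definition proper_groupoid :: "('a, 'b) topgroupoid_scheme \<Rightarrow> bool" where
  "proper_groupoid G \<longleftrightarrow>
     proper_map (gtop G) (prod_topology (unit_space G) (unit_space G)) (\<lambda>g. (rng G g, src G g))"

definition groupoid_morphism ::
  "('a, 'c) topgroupoid_scheme \<Rightarrow> ('b, 'd) topgroupoid_scheme \<Rightarrow> ('a \<Rightarrow> 'b) \<Rightarrow> bool" where
  "groupoid_morphism G H f \<longleftrightarrow>
     f ` arrows G \<subseteq> arrows H \<and>
     (\<forall>g \<in> arrows G. rng H (f g) = f (rng G g) \<and> src H (f g) = f (src G g)) \<and>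
     (\<forall>(g, h) \<in> composable G. f (mult G g h) = mult H (f g) (f h))"

end

theory Submission
  imports Defs
begin

lemma proper_map_cong_top:
  assumes "proper_map X Y f" "\<And>x. x \<in> topspace X \<Longrightarrow> f x = g x"
  shows "proper_map X Y g"
proof -
  have "closed_map X Y g"
    using assms closed_map_eq proper_imp_closed_map by blast
  moreover have "{x \<in> topspace X. g x = y} = {x \<in> topspace X. f x = y}" for y
    using assms(2) by auto
  ultimately show ?thesis using assms(1) unfolding proper_map_def by simp
qed

theorem proposition2p19:
  fixes G1 :: "'a topgroupoid" and G2 :: "'b topgroupoid" and f :: "'a \<Rightarrow> 'b"
  assumes "topological_groupoid G1" and "topological_groupoid G2"
    and "proper_groupoid G1"
    and "groupoid_morphism G1 G2 f"
    and "continuous_map (gtop G1) (gtop G2) f"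
    and "f ` arrows G1 = arrows G2"
    and "proper_map (unit_space G1) (unit_space G2) f"
  shows "proper_groupoid G2"
proof -
  have P1: "proper_map (gtop G1) (prod_topology (unit_space G1) (unit_space G1)) (\<lambda>g. (rng G1 g, src G1 g))"
    using assms(3) unfolding proper_groupoid_def by simp
  have P2: "proper_map (prod_topology (unit_space G1) (unit_space G1)) (prod_topology (unit_space G2) (unit_space G2)) (\<lambda>(x,y). (f x, f y))"
    using assms(7) proper_map_prod by blast
  have P3: "proper_map (gtop G1) (prod_topology (unit_space G2) (unit_space G2)) ((\<lambda>(x,y). (f x, f y)) \<circ> (\<lambda>g. (rng G1 g, src G1 g)))"
    using proper_map_compose[OF P1 P2] .
  have P4: "proper_map (gtop G1) (prod_topology (unit_space G2) (unit_space G2)) ((\<lambda>g. (rng G2 g, src G2 g)) \<circ> f)"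
  proof (rule proper_map_cong_top[OF P3])
    fix x assume "x \<in> topspace (gtop G1)"
    then show "((\<lambda>(x,y). (f x, f y)) \<circ> (\<lambda>g. (rng G1 g, src G1 g))) x = ((\<lambda>g. (rng G2 g, src G2 g)) \<circ> f) x"
      using assms(4) unfolding groupoid_morphism_def arrows_def by auto
  qed
  have "proper_map (gtop G2) (prod_topology (unit_space G2) (unit_space G2)) (\<lambda>g. (rng G2 g, src G2 g))"
    by (rule proper_map_from_composition_left[OF P4 assms(5)])
       (use assms(6) in \<open>simp add: arrows_def\<close>)
  then show ?thesis unfolding proper_groupoid_def .
qed

end
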